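(* Let $\Sigma_{\mathrm{D}}=(\mathcal{S}_{\mathrm{D}},\mathcal{A}_{\mathrm{D}},\Delta,\overline{g},\underline{g})$ be a finite nondeterministic transition system as in the context and let $\gamma\in(0,1)$. Then there exist deterministic maximally and minimally optimal policies for $\Sigma_{\mathrm{D}}$; in particular they are given by $$\overline{\pi}^\star(s)=\arg\max_{a}\ \overline{q}^\star(s,a),\qquad \underline{\pi}^\star(s)=\arg\max_{a}\ \underline{q}^\star(s,a),$$ that is, $\overline{v}_{\overline{\pi}^\star}=\overline{v}^\star$ and $\underline{v}_{\underline{\pi}^\star}=\underline{v}^\star$.
   Context: $\mathcal{S}_{\mathrm{D}},\mathcal{A}_{\mathrm{D}}$ are finite; $\mathcal{A}_{\mathrm{D}}(s)\subseteq\mathcal{A}_{\mathrm{D}}$ are nonempty sets of enabled inputs and the maxima over $a$ are over $\mathcal{A}_{\mathrm{D}}(s)$; for $a\in\mathcal{A}_{\mathrm{D}}(s)$, $\Delta(s,a)\subseteq\mathcal{S}_{\mathrm{D}}$ is nonempty; $\overline{g},\underline{g}:\mathcal{S}_{\mathrm{D}}\times\mathcal{A}_{\mathrm{D}}\to\mathbb{R}$. A policy is a map $\pi$ with $\pi(s)\in\mathcal{A}_{\mathrm{D}}(s)$. For runs $s_0,s_1,\dots$ with actions $a_i\in\mathcal{A}_{\mathrm{D}}(s_i)$ and $s_{i+1}\in\Delta(s_i,a_i)$, the maximal return is $\sum_{i\ge0}\gamma^i\overline{g}(s_i,a_i)$ and the minimal return $\sum_{i\ge0}\gamma^i\underline{g}(s_i,a_i)$.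 $\overline{v}_\pi(s)$ (resp. $\underline{v}_\pi(s)$): maximum of maximal return (resp. minimum of minimal return) over runs from $s$ with $a_i=\pi(s_i)$. $\overline{q}_\pi(s,a)$ (resp. $\underline{q}_\pi(s,a)$): same but with $a_0=a$ and $a_i=\pi(s_i)$ for $i\ge1$. Optimal functions: $\overline{v}^\star=\max_\pi\overline{v}_\pi$, $\underline{v}^\star=\max_\pi\underline{v}_\pi$, $\overline{q}^\star=\max_\pi\overline{q}_\pi$, $\underline{q}^\star=\max_\pi\underline{q}_\pi$ (pointwise). A policy $\pi$ is maximally (resp. minimally) optimal if $\overline{v}_\pi=\overline{v}^\star$ (resp. $\underline{v}_\pi=\underline{v}^\star$). *)

theory Defs
  imports Complex_Main
begin

definition is_run :: "('s \<Rightarrow> 'a set) \<Rightarrow> ('s \<Rightarrow> 'a \<Rightarrow> 's set) \<Rightarrow> (nat \<Rightarrow> 's) \<Rightarrow> (nat \<Rightarrow> 'a) \<Rightarrow> bool" where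
  "is_run A Delta s a \<longleftrightarrow> (\<forall>i. a i \<in> A (s i) \<and> s (Suc i) \<in> Delta (s i) (a i))"

definition disc_return :: "real \<Rightarrow> ('s \<Rightarrow> 'a \<Rightarrow> real) \<Rightarrow> (nat \<Rightarrow> 's) \<Rightarrow> (nat \<Rightarrow> 'a) \<Rightarrow> real" where
  "disc_return \<gamma> g s a = (\<Sum>i. \<gamma> ^ i * g (s i) (a i))"

definition is_policy :: "('s \<Rightarrow> 'a set) \<Rightarrow> ('s \<Rightarrow> 'a) \<Rightarrow> bool" where
  "is_policy A \<pi> \<longleftrightarrow> (\<forall>s. \<pi> s \<in> A s)"

definition v_returns where
  "v_returns A Delta \<gamma> g \<pi> s0 =
     {disc_return \<gamma> g s a | s a. is_run A Delta s a \<and> s 0 = s0 \<and> (\<forall>i. a i = \<pi> (s i))}"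

definition q_returns where
  "q_returns A Delta \<gamma> g \<pi> s0 a0 =
     {disc_return \<gamma> g s a | s a. is_run A Delta s a \<and> s 0 = s0 \<and> a 0 = a0 \<and>
                                 (\<forall>i\<ge>1. a i = \<pi> (s i))}"

definition v_max where "v_max A Delta \<gamma> gmax \<pi> s0 = Sup (v_returns A Delta \<gamma> gmax \<pi> s0)"
definition v_min where "v_min A Delta \<gamma> gmin \<pi> s0 = Inf (v_returns A Delta \<gamma> gmin \<pi> s0)"
definition q_max where "q_max A Delta \<gamma> gmax \<pi> s0 a0 = Sup (q_returns A Delta \<gamma> gmax \<pi> s0 a0)"
definition q_min where "q_min A Delta \<gamma> gmin \<pi> s0 a0 = Inf (q_returns A Delta \<gamma> gmin \<pi> s0 a0)"

definition v_max_opt :: "('s::finite \<Rightarrow> 'a::finite set) \<Rightarrow> _" where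
  "v_max_opt A Delta \<gamma> gmax s0 = Max {v_max A Delta \<gamma> gmax \<pi> s0 | \<pi>. is_policy A \<pi>}"
definition v_min_opt :: "('s::finite \<Rightarrow> 'a::finite set) \<Rightarrow> _" where
  "v_min_opt A Delta \<gamma> gmin s0 = Max {v_min A Delta \<gamma> gmin \<pi> s0 | \<pi>. is_policy A \<pi>}"
definition q_max_opt :: "('s::finite \<Rightarrow> 'a::finite set) \<Rightarrow> _" where
  "q_max_opt A Delta \<gamma> gmax s0 a0 = Max {q_max A Delta \<gamma> gmax \<pi> s0 a0 | \<pi>. is_policy A \<pi>}"
definition q_min_opt :: "('s::finite \<Rightarrow> 'a::finite set) \<Rightarrow> _" where
  "q_min_opt A Delta \<gamma> gmin s0 a0 = Max {q_min A Delta \<gamma> gmin \<pi> s0 a0 | \<pi>. is_policy A \<pi>}"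

end

theory Submission
  imports Defs
begin

definition gbound :: "('s::finite \<Rightarrow> 'a::finite \<Rightarrow> real) \<Rightarrow> real" where
  "gbound g = Max (range (\<lambda>p. \<bar>g (fst p) (snd p)\<bar>))"

lemma gbound_ge: "\<bar>g x y\<bar> \<le> gbound (g :: 's::finite \<Rightarrow> 'a::finite \<Rightarrow> real)"
  unfolding gbound_def by (rule Max_ge) (auto intro: image_eqI[where x="(x,y)"])

lemma summable_ret:
  fixes g :: "'s::finite \<Rightarrow> 'a::finite \<Rightarrow> real"
  assumes "0 \<le> \<gamma>" "\<gamma> < 1"
  shows "summable (\<lambda>i. \<gamma> ^ i * g (s i) (a i))"
proof (rule summable_comparison_test')
  show "summable (\<lambda>n. \<gamma> ^ n * gbound g)"
    by (rule summable_mult2, rule summable_geometric) (use assms in simp)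
  fix n
  show "norm (\<gamma> ^ n * g (s n) (a n)) \<le> \<gamma> ^ n * gbound g"
    using assms gbound_ge[of g "s n" "a n"] by (simp add: abs_mult mult_left_mono)
qed

lemma ret_le:
  fixes g :: "'s::finite \<Rightarrow> 'a::finite \<Rightarrow> real"
  assumes "0 \<le> \<gamma>" "\<gamma> < 1"
  shows "disc_return \<gamma> g s a \<le> (\<Sum>n. \<gamma> ^ n * gbound g)"
  unfolding disc_return_def
proof (rule suminf_le)
  show "summable (\<lambda>n. \<gamma> ^ n * gbound g)"
    by (rule summable_mult2, rule summable_geometric) (use assms in simp)
  show "summable (\<lambda>i. \<gamma> ^ i * g (s i) (a i))" by (rule summable_ret[OF assms])
  fix n
  show "\<gamma> ^ n * g (s n) (a n) \<le> \<gamma> ^ n * gbound g"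
    using assms gbound_ge[of g "s n" "a n"] by (intro mult_left_mono) auto
qed

lemma ret_split:
  fixes g :: "'s::finite \<Rightarrow> 'a::finite \<Rightarrow> real"
  assumes "0 \<le> \<gamma>" "\<gamma> < 1"
  shows "disc_return \<gamma> g s a = g (s 0) (a 0) + \<gamma> * disc_return \<gamma> g (\<lambda>i. s (Suc i)) (\<lambda>i. a (Suc i))"
proof -
  have S: "summable (\<lambda>i. \<gamma> ^ i * g (s i) (a i))" by (rule summable_ret[OF assms])
  have S2: "summable (\<lambda>i. \<gamma> ^ i * g (s (Suc i)) (a (Suc i)))" by (rule summable_ret[OF assms])
  have "(\<Sum>i. \<gamma> ^ Suc i * g (s (Suc i)) (a (Suc i))) = (\<Sum>i. \<gamma> ^ i * g (s i) (a i)) - g (s 0) (a 0)"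
    using suminf_split_head[OF S] by simp
  moreover have "(\<Sum>i. \<gamma> ^ Suc i * g (s (Suc i)) (a (Suc i))) = \<gamma> * (\<Sum>i. \<gamma> ^ i * g (s (Suc i)) (a (Suc i)))"
    using suminf_mult[OF S2, of \<gamma>] by (simp add: mult.assoc)
  ultimately show ?thesis unfolding disc_return_def by simp
qed

lemma ret_neg:
  fixes g :: "'s::finite \<Rightarrow> 'a::finite \<Rightarrow> real"
  assumes "0 \<le> \<gamma>" "\<gamma> < 1"
  shows "disc_return \<gamma> (\<lambda>x y. - g x y) s a = - disc_return \<gamma> g s a"
  unfolding disc_return_def using suminf_minus[OF summable_ret[OF assms, of g s a]] by simp

lemma run_prepend:
  assumes "is_run A D t b" "t 0 \<in> D s0 a0" "a0 \<in> A s0"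
  shows "is_run A D (case_nat s0 t) (case_nat a0 b)"
  using assms unfolding is_run_def by (auto split: nat.split)

lemma run_tail:
  assumes "is_run A D t b"
  shows "is_run A D (\<lambda>i. t (Suc i)) (\<lambda>i. b (Suc i))"
  using assms unfolding is_run_def by auto

lemma run_exists:
  assumes "is_policy A \<pi>" "\<And>s a. a \<in> A s \<Longrightarrow> D s a \<noteq> {}"
  shows "\<exists>t b. is_run A D t b \<and> t 0 = z \<and> (\<forall>i. b i = \<pi> (t i))"
proof -
  define nxt where "nxt s = (SOME x. x \<in> D s (\<pi> s))" for s
  have nx: "nxt s \<in> D s (\<pi> s)" for s
    using assms unfolding nxt_def is_policy_def by (metis some_in_eq)
  define t where "t i = (nxt ^^ i) z" for i
  have "is_run A D t (\<lambda>i. \<pi> (t i))"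
    using assms(1) nx unfolding is_run_def is_policy_def t_def by auto
  moreover have "t 0 = z" by (simp add: t_def)
  ultimately show ?thesis by blast
qed

lemma vq_returns:
  assumes "is_policy A \<pi>"
  shows "v_returns A D \<gamma> g \<pi> s0 = q_returns A D \<gamma> g \<pi> s0 (\<pi> s0)"
  unfolding v_returns_def q_returns_def
  apply (rule Collect_cong)
  apply safe
   apply auto[1]
  subgoal for x s a
    apply (rule exI[of _ s], rule exI[of _ a])
    apply (auto)
    by (metis One_nat_def Suc_le_eq gr0I)
  done

lemma vq_max:
  assumes "is_policy A \<pi>"
  shows "v_max A D \<gamma> g \<pi> s0 = q_max A D \<gamma> g \<pi> s0 (\<pi> s0)"
  unfolding v_max_def q_max_def vq_returns[OF assms] ..

lemma vq_min:
  assumes "is_policy A \<pi>"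
  shows "v_min A D \<gamma> g \<pi> s0 = q_min A D \<gamma> g \<pi> s0 (\<pi> s0)"
  unfolding v_min_def q_min_def vq_returns[OF assms] ..

lemma v_returns_ne:
  assumes "is_policy A \<pi>" "\<And>s a. a \<in> A s \<Longrightarrow> D s a \<noteq> {}"
  shows "v_returns A D \<gamma> g \<pi> z \<noteq> {}"
  using run_exists[where A=A and D=D and \<pi>=\<pi> and z=z, OF assms] unfolding v_returns_def by blast

lemma v_returns_bdd:
  fixes g :: "'s::finite \<Rightarrow> 'a::finite \<Rightarrow> real"
  assumes "0 \<le> \<gamma>" "\<gamma> < 1"
  shows "bdd_above (v_returns A D \<gamma> g \<pi> s0)" "bdd_above (q_returns A D \<gamma> g \<pi> s0 a0)"
  unfolding v_returns_def q_returns_def bdd_above_def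
  using ret_le[OF assms, of g] by blast+

lemma q_max_bellman:
  fixes g :: "'s::finite \<Rightarrow> 'a::finite \<Rightarrow> real"
  assumes pol: "is_policy A \<pi>" and Dne: "\<And>s a. a \<in> A s \<Longrightarrow> D s a \<noteq> {}"
    and a0: "a0 \<in> A s0" and g0: "0 < \<gamma>" and g1: "\<gamma> < 1"
  shows "q_max A D \<gamma> g \<pi> s0 a0 = g s0 a0 + \<gamma> * Max (v_max A D \<gamma> g \<pi> ` D s0 a0)"
proof -
  have ge: "0 \<le> \<gamma>" using g0 by simp
  let ?R = "q_returns A D \<gamma> g \<pi> s0 a0"
  let ?M = "Max (v_max A D \<gamma> g \<pi> ` D s0 a0)"
  have fin: "finite (v_max A D \<gamma> g \<pi> ` D s0 a0)" by simp
  have ne: "v_max A D \<gamma> g \<pi> ` D s0 a0 \<noteq> {}" using Dne[OF a0] by simp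
  obtain s' where s': "s' \<in> D s0 a0" "?M = v_max A D \<gamma> g \<pi> s'"
    using Max_in[OF fin ne] by auto
  have pre: "g s0 a0 + \<gamma> * r \<in> ?R" if "r \<in> v_returns A D \<gamma> g \<pi> s1" "s1 \<in> D s0 a0" for r s1
  proof -
    from that obtain t b where tb: "r = disc_return \<gamma> g t b" "is_run A D t b" "t 0 = s1"
      "\<forall>i. b i = \<pi> (t i)" unfolding v_returns_def by blast
    have run: "is_run A D (case_nat s0 t) (case_nat a0 b)"
      by (rule run_prepend) (use tb that a0 in auto)
    have "disc_return \<gamma> g (case_nat s0 t) (case_nat a0 b) = g s0 a0 + \<gamma> * r"
      using ret_split[OF ge g1, of g "case_nat s0 t" "case_nat a0 b"] tb(1) by simp
    moreover have "\<forall>i\<ge>1. case_nat a0 b i = \<pi> (case_nat s0 t i)"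
      using tb by (auto split: nat.split)
    ultimately show ?thesis unfolding q_returns_def using run by force
  qed
  have Rne: "?R \<noteq> {}"
  proof -
    obtain r where "r \<in> v_returns A D \<gamma> g \<pi> s'"
      using v_returns_ne[where A=A and D=D and \<pi>=\<pi> and z=s' and g=g and \<gamma>=\<gamma>, OF pol Dne] by blast
    then show ?thesis using pre s'(1) by blast
  qed
  have le: "Sup ?R \<le> g s0 a0 + \<gamma> * ?M"
  proof (rule cSup_least[OF Rne])
    fix x assume "x \<in> ?R"
    then obtain s a where sa: "x = disc_return \<gamma> g s a" "is_run A D s a" "s 0 = s0" "a 0 = a0"
      "\<forall>i\<ge>1. a i = \<pi> (s i)" unfolding q_returns_def by blast
    have s1: "s 1 \<in> D s0 a0" using sa unfolding is_run_def by (metis One_nat_def)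
    have "disc_return \<gamma> g (\<lambda>i. s (Suc i)) (\<lambda>i. a (Suc i)) \<in> v_returns A D \<gamma> g \<pi> (s 1)"
      unfolding v_returns_def using run_tail[OF sa(2)] sa(5) by auto
    then have "disc_return \<gamma> g (\<lambda>i. s (Suc i)) (\<lambda>i. a (Suc i)) \<le> v_max A D \<gamma> g \<pi> (s 1)"
      unfolding v_max_def by (rule cSup_upper) (rule v_returns_bdd[OF ge g1])
    also have "\<dots> \<le> ?M" using s1 fin by (intro Max_ge) auto
    finally show "x \<le> g s0 a0 + \<gamma> * ?M"
      using ret_split[OF ge g1, of g s a] sa ge by (simp add: mult_left_mono)
  qed
  have ge2: "g s0 a0 + \<gamma> * ?M \<le> Sup ?R"
  proof -
    have "v_max A D \<gamma> g \<pi> s' \<le> (Sup ?R - g s0 a0) / \<gamma>"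
      unfolding v_max_def
    proof (rule cSup_least[OF v_returns_ne[where A=A and D=D and \<pi>=\<pi> and z=s' and g=g and \<gamma>=\<gamma>, OF pol Dne]])
      fix r assume "r \<in> v_returns A D \<gamma> g \<pi> s'"
      then have "g s0 a0 + \<gamma> * r \<le> Sup ?R"
        using pre s'(1) by (intro cSup_upper v_returns_bdd[OF ge g1]) auto
      then show "r \<le> (Sup ?R - g s0 a0) / \<gamma>" using g0 by (simp add: field_simps)
    qed
    then show ?thesis using s'(2) g0 by (simp add: field_simps)
  qed
  show ?thesis unfolding q_max_def using le ge2 by simp
qed

lemma returns_neg:
  fixes g :: "'s::finite \<Rightarrow> 'a::finite \<Rightarrow> real"
  assumes "0 \<le> \<gamma>" "\<gamma> < 1"
  shows "v_returns A D \<gamma> (\<lambda>x y. - g x y) \<pi> z = uminus ` v_returns A D \<gamma> g \<pi> z"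
    "q_returns A D \<gamma> (\<lambda>x y. - g x y) \<pi> z a0 = uminus ` q_returns A D \<gamma> g \<pi> z a0"
  unfolding v_returns_def q_returns_def ret_neg[OF assms] by blast+

lemma min_neg:
  fixes g :: "'s::finite \<Rightarrow> 'a::finite \<Rightarrow> real"
  assumes "0 \<le> \<gamma>" "\<gamma> < 1"
  shows "v_min A D \<gamma> g \<pi> z = - v_max A D \<gamma> (\<lambda>x y. - g x y) \<pi> z"
    "q_min A D \<gamma> g \<pi> z a0 = - q_max A D \<gamma> (\<lambda>x y. - g x y) \<pi> z a0"
  unfolding v_min_def v_max_def q_min_def q_max_def returns_neg[OF assms] Inf_real_def by simp_all

definition ext_min :: "'s set \<Rightarrow> ('s \<Rightarrow> real) \<Rightarrow> real" where
  "ext_min S f = - Max ((\<lambda>x. - f x) ` S)"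

lemma q_min_bellman:
  fixes g :: "'s::finite \<Rightarrow> 'a::finite \<Rightarrow> real"
  assumes pol: "is_policy A \<pi>" and Dne: "\<And>s a. a \<in> A s \<Longrightarrow> D s a \<noteq> {}"
    and a0: "a0 \<in> A s0" and g0: "0 < \<gamma>" and g1: "\<gamma> < 1"
  shows "q_min A D \<gamma> g \<pi> s0 a0 = g s0 a0 + \<gamma> * ext_min (D s0 a0) (v_min A D \<gamma> g \<pi>)"
proof -
  have ge: "0 \<le> \<gamma>" using g0 by simp
  have "q_min A D \<gamma> g \<pi> s0 a0 = - q_max A D \<gamma> (\<lambda>x y. - g x y) \<pi> s0 a0"
    by (rule min_neg[OF ge g1])
  also have "\<dots> = - (- g s0 a0 + \<gamma> * Max (v_max A D \<gamma> (\<lambda>x y. - g x y) \<pi> ` D s0 a0))"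
    using q_max_bellman[OF pol Dne a0 g0 g1] by simp
  also have "v_max A D \<gamma> (\<lambda>x y. - g x y) \<pi> = (\<lambda>x. - v_min A D \<gamma> g \<pi> x)"
  proof (rule ext)
    fix x show "v_max A D \<gamma> (\<lambda>x y. - g x y) \<pi> x = - v_min A D \<gamma> g \<pi> x"
      using min_neg(1)[OF ge g1, where A=A and D=D and g=g and \<pi>=\<pi> and z=x] by simp
  qed
  finally show ?thesis unfolding ext_min_def by simp
qed

lemma ext_max_E1:
  fixes f h :: "'s::finite \<Rightarrow> real"
  assumes "S \<noteq> {}" "\<forall>x\<in>S. f x - h x \<le> c"
  shows "Max (f ` S) - Max (h ` S) \<le> c"
proof -
  have fin: "finite S" by simp
  have "Max (f ` S) \<in> f ` S" by (rule Max_in) (use fin assms(1) in auto)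
  then obtain x where x: "x \<in> S" "Max (f ` S) = f x" by blast
  have "h x \<le> Max (h ` S)" using x fin by (intro Max_ge) auto
  moreover have "f x - h x \<le> c" using x assms(2) by blast
  ultimately show ?thesis using x(2) by linarith
qed

lemma ext_min_E1:
  fixes f h :: "'s::finite \<Rightarrow> real"
  assumes "S \<noteq> {}" "\<forall>x\<in>S. f x - h x \<le> c"
  shows "ext_min S f - ext_min S h \<le> c"
proof -
  have 1: "Max ((\<lambda>x. - h x) ` S) - Max ((\<lambda>x. - f x) ` S) \<le> c"
    by (rule ext_max_E1) (use assms in auto)
  then show ?thesis unfolding ext_min_def by linarith
qed

lemma le_gamma_le0: "(M::real) \<le> \<gamma> * M \<Longrightarrow> \<gamma> < 1 \<Longrightarrow> M \<le> 0"
  by (cases "M > 0") (use mult_strict_right_mono[of \<gamma> 1 M] in auto)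

lemma generic:
  fixes A :: "'s::finite \<Rightarrow> 'a::finite set" and D :: "'s \<Rightarrow> 'a \<Rightarrow> 's set"
    and g :: "'s \<Rightarrow> 'a \<Rightarrow> real"
    and v :: "('s \<Rightarrow> 'a) \<Rightarrow> 's \<Rightarrow> real" and q :: "('s \<Rightarrow> 'a) \<Rightarrow> 's \<Rightarrow> 'a \<Rightarrow> real"
    and Ext :: "'s set \<Rightarrow> ('s \<Rightarrow> real) \<Rightarrow> real"
    and Vo :: "'s \<Rightarrow> real" and Qo :: "'s \<Rightarrow> 'a \<Rightarrow> real"
  assumes A_ne: "\<And>s. A s \<noteq> {}" and D_ne: "\<And>s a. a \<in> A s \<Longrightarrow> D s a \<noteq> {}"
    and g0: "0 < \<gamma>" and g1: "\<gamma> < 1"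
    and E1: "\<And>S f h c. S \<noteq> {} \<Longrightarrow> \<forall>x\<in>S. f x - h x \<le> c \<Longrightarrow> Ext S f - Ext S h \<le> c"
    and Bq: "\<And>\<pi> s a. is_policy A \<pi> \<Longrightarrow> a \<in> A s \<Longrightarrow> q \<pi> s a = g s a + \<gamma> * Ext (D s a) (v \<pi>)"
    and Bv: "\<And>\<pi> s. is_policy A \<pi> \<Longrightarrow> v \<pi> s = q \<pi> s (\<pi> s)"
    and Vo: "\<And>s. Vo s = Max {v \<sigma> s | \<sigma>. is_policy A \<sigma>}"
    and Qo: "\<And>s a. Qo s a = Max {q \<sigma> s a | \<sigma>. is_policy A \<sigma>}"
  shows "(\<exists>\<pi>. is_policy A \<pi> \<and> v \<pi> = Vo)
    \<and> (\<forall>\<pi>. is_policy A \<pi> \<and> (\<forall>s. Qo s (\<pi> s) = Max (Qo s ` A s)) \<longrightarrow> v \<pi> = Vo)"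
proof -
  let ?P = "{\<sigma>. is_policy A \<sigma>}"
  have finP: "finite ?P" by simp
  have pex: "is_policy A (\<lambda>s. SOME a. a \<in> A s)"
    unfolding is_policy_def using A_ne by (metis some_in_eq)
  have ge: "0 \<le> \<gamma>" using g0 by simp
  have mono: "Ext S f \<le> Ext S h" if "S \<noteq> {}" "\<forall>x\<in>S. f x \<le> h x" for S f h
    using E1[of S f h 0] that by force
  have Bv': "v \<sigma> s = g s (\<sigma> s) + \<gamma> * Ext (D s (\<sigma> s)) (v \<sigma>)" if "is_policy A \<sigma>" for \<sigma> s
    using Bv[OF that] Bq[OF that] that unfolding is_policy_def by simp
  have Dne': "D s (\<sigma> s) \<noteq> {}" if "is_policy A \<sigma>" for \<sigma> s
    using D_ne that unfolding is_policy_def by simp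
  have C1: "v \<sigma> s \<le> W s" if \<sigma>: "is_policy A \<sigma>"
      and h: "\<forall>s. g s (\<sigma> s) + \<gamma> * Ext (D s (\<sigma> s)) W \<le> W s" for \<sigma> W s
  proof -
    define M where "M = Max (range (\<lambda>s. v \<sigma> s - W s))"
    have Mge: "v \<sigma> x - W x \<le> M" for x unfolding M_def by (rule Max_ge) auto
    have step: "v \<sigma> x - W x \<le> \<gamma> * M" for x
    proof -
      have "Ext (D x (\<sigma> x)) (v \<sigma>) - Ext (D x (\<sigma> x)) W \<le> M"
        by (rule E1) (use Dne'[OF \<sigma>] Mge in auto)
      then have "\<gamma> * (Ext (D x (\<sigma> x)) (v \<sigma>) - Ext (D x (\<sigma> x)) W) \<le> \<gamma> * M"
        using ge by (rule mult_left_mono)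
      then have "\<gamma> * Ext (D x (\<sigma> x)) (v \<sigma>) - \<gamma> * Ext (D x (\<sigma> x)) W \<le> \<gamma> * M"
        by (simp add: right_diff_distrib)
      moreover have "g x (\<sigma> x) + \<gamma> * Ext (D x (\<sigma> x)) W \<le> W x" using h by blast
      ultimately show ?thesis using Bv'[OF \<sigma>, of x] by linarith
    qed
    have "M \<in> range (\<lambda>s. v \<sigma> s - W s)" unfolding M_def by (rule Max_in) auto
    then obtain x where "M = v \<sigma> x - W x" by blast
    then have "M \<le> \<gamma> * M" using step[of x] by simp
    then have "M \<le> 0" using g1 by (rule le_gamma_le0)
    then show ?thesis using Mge[of s] by simp
  qed
  have C2: "W s \<le> v \<sigma> s" if \<sigma>: "is_policy A \<sigma>"
      and h: "\<forall>s. W s \<le> g s (\<sigma> s) + \<gamma> * Ext (D s (\<sigma> s)) W" for \<sigma> W s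
  proof -
    define M where "M = Max (range (\<lambda>s. W s - v \<sigma> s))"
    have Mge: "W x - v \<sigma> x \<le> M" for x unfolding M_def by (rule Max_ge) auto
    have step: "W x - v \<sigma> x \<le> \<gamma> * M" for x
    proof -
      have "Ext (D x (\<sigma> x)) W - Ext (D x (\<sigma> x)) (v \<sigma>) \<le> M"
        by (rule E1) (use Dne'[OF \<sigma>] Mge in auto)
      then have "\<gamma> * (Ext (D x (\<sigma> x)) W - Ext (D x (\<sigma> x)) (v \<sigma>)) \<le> \<gamma> * M"
        using ge by (rule mult_left_mono)
      then have "\<gamma> * Ext (D x (\<sigma> x)) W - \<gamma> * Ext (D x (\<sigma> x)) (v \<sigma>) \<le> \<gamma> * M"
        by (simp add: right_diff_distrib)
      moreover have "W x \<le> g x (\<sigma> x) + \<gamma> * Ext (D x (\<sigma> x)) W" using h by blast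
      ultimately show ?thesis using Bv'[OF \<sigma>, of x] by linarith
    qed
    have "M \<in> range (\<lambda>s. W s - v \<sigma> s)" unfolding M_def by (rule Max_in) auto
    then obtain x where "M = W x - v \<sigma> x" by blast
    then have "M \<le> \<gamma> * M" using step[of x] by simp
    then have "M \<le> 0" using g1 by (rule le_gamma_le0)
    then show ?thesis using Mge[of s] by simp
  qed
  define \<Phi> where "\<Phi> \<sigma> = (\<Sum>s\<in>UNIV. v \<sigma> s)" for \<sigma>
  have "Max (\<Phi> ` ?P) \<in> \<Phi> ` ?P" by (rule Max_in) (use finP pex in auto)
  then obtain \<pi>0 where p0: "is_policy A \<pi>0" "\<Phi> \<pi>0 = Max (\<Phi> ` ?P)" by auto
  have p0max: "\<Phi> \<sigma> \<le> \<Phi> \<pi>0" if "is_policy A \<sigma>" for \<sigma>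
    unfolding p0(2) by (rule Max_ge) (use finP that in auto)
  have G: "g s a + \<gamma> * Ext (D s a) (v \<pi>0) \<le> v \<pi>0 s" if a: "a \<in> A s" for s a
  proof (rule ccontr)
    assume gt: "\<not> ?thesis"
    define \<pi>1 where "\<pi>1 = \<pi>0(s := a)"
    have pol1: "is_policy A \<pi>1" using p0(1) a unfolding \<pi>1_def is_policy_def by auto
    have "\<forall>x. v \<pi>0 x \<le> g x (\<pi>1 x) + \<gamma> * Ext (D x (\<pi>1 x)) (v \<pi>0)"
    proof
      fix x show "v \<pi>0 x \<le> g x (\<pi>1 x) + \<gamma> * Ext (D x (\<pi>1 x)) (v \<pi>0)"
        using gt Bv'[OF p0(1), of x] unfolding \<pi>1_def by (cases "x = s") auto
    qed
    then have le: "v \<pi>0 x \<le> v \<pi>1 x" for x by (rule C2[OF pol1])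
    have "Ext (D s a) (v \<pi>0) \<le> Ext (D s a) (v \<pi>1)"
      by (rule mono) (use D_ne[OF a] le in auto)
    then have "\<gamma> * Ext (D s a) (v \<pi>0) \<le> \<gamma> * Ext (D s a) (v \<pi>1)"
      using ge by (rule mult_left_mono)
    moreover have "v \<pi>1 s = g s a + \<gamma> * Ext (D s a) (v \<pi>1)"
      using Bv'[OF pol1, of s] unfolding \<pi>1_def by simp
    ultimately have "v \<pi>0 s < v \<pi>1 s" using gt by linarith
    then have "\<Phi> \<pi>0 < \<Phi> \<pi>1" unfolding \<Phi>_def
      by (intro sum_strict_mono_ex1) (use le in auto)
    then show False using p0max[OF pol1] by simp
  qed
  have opt: "v \<sigma> s \<le> v \<pi>0 s" if \<sigma>: "is_policy A \<sigma>" for \<sigma> s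
    by (rule C1[OF \<sigma>]) (use G \<sigma> in \<open>auto simp: is_policy_def\<close>)
  have Vo0: "Vo = v \<pi>0"
  proof
    fix s
    have eq: "{v \<sigma> s | \<sigma>. is_policy A \<sigma>} = (\<lambda>\<sigma>. v \<sigma> s) ` ?P" by auto
    show "Vo s = v \<pi>0 s" unfolding Vo eq
      by (rule Max_eqI) (use finP opt p0(1) in auto)
  qed
  have Qo0: "Qo s a = q \<pi>0 s a" if a: "a \<in> A s" for s a
  proof -
    have eq: "{q \<sigma> s a | \<sigma>. is_policy A \<sigma>} = (\<lambda>\<sigma>. q \<sigma> s a) ` ?P" by auto
    have "q \<sigma> s a \<le> q \<pi>0 s a" if \<sigma>: "is_policy A \<sigma>" for \<sigma>
    proof -
      have "Ext (D s a) (v \<sigma>) \<le> Ext (D s a) (v \<pi>0)"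
        by (rule mono) (use D_ne[OF a] opt[OF \<sigma>] in auto)
      then have "\<gamma> * Ext (D s a) (v \<sigma>) \<le> \<gamma> * Ext (D s a) (v \<pi>0)"
        using ge by (rule mult_left_mono)
      then show ?thesis using Bq[OF \<sigma> a] Bq[OF p0(1) a] by simp
    qed
    then show ?thesis unfolding Qo eq
      by (intro Max_eqI) (use finP p0(1) in auto)
  qed
  have MQ: "Max (Qo s ` A s) = v \<pi>0 s" for s
  proof (rule Max_eqI)
    show "finite (Qo s ` A s)" by simp
    show "y \<le> v \<pi>0 s" if "y \<in> Qo s ` A s" for y
      using that Qo0 G Bq[OF p0(1)] by auto
    have "\<pi>0 s \<in> A s" using p0(1) unfolding is_policy_def by simp
    moreover have "Qo s (\<pi>0 s) = v \<pi>0 s" using Qo0[OF calculation] Bv[OF p0(1)] by simp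
    ultimately show "v \<pi>0 s \<in> Qo s ` A s" by force
  qed
  have part2: "v \<pi> = Vo" if \<pi>: "is_policy A \<pi>" and h: "\<forall>s. Qo s (\<pi> s) = Max (Qo s ` A s)" for \<pi>
  proof -
    have eqW: "v \<pi>0 s = g s (\<pi> s) + \<gamma> * Ext (D s (\<pi> s)) (v \<pi>0)" for s
    proof -
      have a: "\<pi> s \<in> A s" using \<pi> unfolding is_policy_def by simp
      have "v \<pi>0 s = Qo s (\<pi> s)" using h MQ by simp
      also have "\<dots> = q \<pi>0 s (\<pi> s)" by (rule Qo0[OF a])
      also have "\<dots> = g s (\<pi> s) + \<gamma> * Ext (D s (\<pi> s)) (v \<pi>0)" by (rule Bq[OF p0(1) a])
      finally show ?thesis .
    qed
    have "v \<pi> s = v \<pi>0 s" for s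
      using C1[OF \<pi>, of "v \<pi>0" s] C2[OF \<pi>, of "v \<pi>0" s] eqW by (simp add: antisym)
    then show ?thesis using Vo0 by auto
  qed
  show ?thesis using p0(1) Vo0 part2 by auto
qed

theorem corollary2:
  fixes A :: "'s::finite \<Rightarrow> 'a::finite set"
    and Delta :: "'s \<Rightarrow> 'a \<Rightarrow> 's set"
    and gmax gmin :: "'s \<Rightarrow> 'a \<Rightarrow> real"
    and \<gamma> :: real
  assumes A_ne: "\<And>s. A s \<noteq> {}"
    and Delta_ne: "\<And>s a. a \<in> A s \<Longrightarrow> Delta s a \<noteq> {}"
    and gamma: "0 < \<gamma>" "\<gamma> < 1"
  shows "(\<exists>\<pi>. is_policy A \<pi> \<and> v_max A Delta \<gamma> gmax \<pi> = v_max_opt A Delta \<gamma> gmax)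
       \<and> (\<exists>\<pi>. is_policy A \<pi> \<and> v_min A Delta \<gamma> gmin \<pi> = v_min_opt A Delta \<gamma> gmin)
       \<and> (\<forall>\<pi>. is_policy A \<pi> \<and>
              (\<forall>s. q_max_opt A Delta \<gamma> gmax s (\<pi> s) = Max (q_max_opt A Delta \<gamma> gmax s ` A s))
              \<longrightarrow> v_max A Delta \<gamma> gmax \<pi> = v_max_opt A Delta \<gamma> gmax)
       \<and> (\<forall>\<pi>. is_policy A \<pi> \<and>
              (\<forall>s. q_min_opt A Delta \<gamma> gmin s (\<pi> s) = Max (q_min_opt A Delta \<gamma> gmin s ` A s))
              \<longrightarrow> v_min A Delta \<gamma> gmin \<pi> = v_min_opt A Delta \<gamma> gmin)"
proof -
  have ge: "0 \<le> \<gamma>" using gamma by simp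
  have M: "(\<exists>\<pi>. is_policy A \<pi> \<and> v_max A Delta \<gamma> gmax \<pi> = v_max_opt A Delta \<gamma> gmax)
       \<and> (\<forall>\<pi>. is_policy A \<pi> \<and>
              (\<forall>s. q_max_opt A Delta \<gamma> gmax s (\<pi> s) = Max (q_max_opt A Delta \<gamma> gmax s ` A s))
              \<longrightarrow> v_max A Delta \<gamma> gmax \<pi> = v_max_opt A Delta \<gamma> gmax)"
  proof (rule generic[where A=A and D=Delta and g=gmax and v="v_max A Delta \<gamma> gmax"
        and q="q_max A Delta \<gamma> gmax" and Ext="\<lambda>S f. Max (f ` S)" and \<gamma>=\<gamma>
        and Vo="v_max_opt A Delta \<gamma> gmax" and Qo="q_max_opt A Delta \<gamma> gmax"])
    show "\<And>s. A s \<noteq> {}" by (rule A_ne)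
    show "\<And>s a. a \<in> A s \<Longrightarrow> Delta s a \<noteq> {}" by (rule Delta_ne)
    show "0 < \<gamma>" "\<gamma> < 1" by (rule gamma)+
    show "\<And>(S::'s set) (f::'s \<Rightarrow> real) h c. S \<noteq> {} \<Longrightarrow> \<forall>x\<in>S. f x - h x \<le> c \<Longrightarrow> Max (f ` S) - Max (h ` S) \<le> c"
      by (rule ext_max_E1)
    show "\<And>\<pi> s a. is_policy A \<pi> \<Longrightarrow> a \<in> A s \<Longrightarrow>
        q_max A Delta \<gamma> gmax \<pi> s a = gmax s a + \<gamma> * Max (v_max A Delta \<gamma> gmax \<pi> ` Delta s a)"
      by (rule q_max_bellman[OF _ Delta_ne _ gamma])
    show "\<And>\<pi> s. is_policy A \<pi> \<Longrightarrow> v_max A Delta \<gamma> gmax \<pi> s = q_max A Delta \<gamma> gmax \<pi> s (\<pi> s)"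
      by (rule vq_max)
    show "\<And>s. v_max_opt A Delta \<gamma> gmax s = Max {v_max A Delta \<gamma> gmax \<sigma> s | \<sigma>. is_policy A \<sigma>}"
      by (rule v_max_opt_def)
    show "\<And>s a. q_max_opt A Delta \<gamma> gmax s a = Max {q_max A Delta \<gamma> gmax \<sigma> s a | \<sigma>. is_policy A \<sigma>}"
      by (rule q_max_opt_def)
  qed
  have N: "(\<exists>\<pi>. is_policy A \<pi> \<and> v_min A Delta \<gamma> gmin \<pi> = v_min_opt A Delta \<gamma> gmin)
       \<and> (\<forall>\<pi>. is_policy A \<pi> \<and>
              (\<forall>s. q_min_opt A Delta \<gamma> gmin s (\<pi> s) = Max (q_min_opt A Delta \<gamma> gmin s ` A s))
              \<longrightarrow> v_min A Delta \<gamma> gmin \<pi> = v_min_opt A Delta \<gamma> gmin)"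
  proof (rule generic[where A=A and D=Delta and g=gmin and v="v_min A Delta \<gamma> gmin"
        and q="q_min A Delta \<gamma> gmin" and Ext="ext_min" and \<gamma>=\<gamma>
        and Vo="v_min_opt A Delta \<gamma> gmin" and Qo="q_min_opt A Delta \<gamma> gmin"])
    show "\<And>s. A s \<noteq> {}" by (rule A_ne)
    show "\<And>s a. a \<in> A s \<Longrightarrow> Delta s a \<noteq> {}" by (rule Delta_ne)
    show "0 < \<gamma>" "\<gamma> < 1" by (rule gamma)+
    show "\<And>(S::'s set) (f::'s \<Rightarrow> real) h c. S \<noteq> {} \<Longrightarrow> \<forall>x\<in>S. f x - h x \<le> c \<Longrightarrow> ext_min S f - ext_min S h \<le> c"
      by (rule ext_min_E1)
    show "\<And>\<pi> s a. is_policy A \<pi> \<Longrightarrow> a \<in> A s \<Longrightarrow>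
        q_min A Delta \<gamma> gmin \<pi> s a = gmin s a + \<gamma> * ext_min (Delta s a) (v_min A Delta \<gamma> gmin \<pi>)"
      by (rule q_min_bellman[OF _ Delta_ne _ gamma])
    show "\<And>\<pi> s. is_policy A \<pi> \<Longrightarrow> v_min A Delta \<gamma> gmin \<pi> s = q_min A Delta \<gamma> gmin \<pi> s (\<pi> s)"
      by (rule vq_min)
    show "\<And>s. v_min_opt A Delta \<gamma> gmin s = Max {v_min A Delta \<gamma> gmin \<sigma> s | \<sigma>. is_policy A \<sigma>}"
      by (rule v_min_opt_def)
    show "\<And>s a. q_min_opt A Delta \<gamma> gmin s a = Max {q_min A Delta \<gamma> gmin \<sigma> s a | \<sigma>. is_policy A \<sigma>}"
      by (rule q_min_opt_def)
  qed
  show ?thesis using M N by blast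
qed

end
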